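(* Let $n>2$, $V=\mathbb{F}_2^n$ with canonical basis $e_1,\dots,e_n$, and let $W=\langle e_3,\dots,e_n\rangle$. For $b\in W\setminus\{0\}$ define $\pi_b,\varepsilon_b\in\mathrm{Sym}(V)$ by $$x\pi_b=x+x^{(2)}b+e_1,\qquad x\varepsilon_b=x+x^{(1)}b+e_2,$$ and let $T_b=\langle \pi_b,\varepsilon_b,\sigma_{e_i}\mid 3\le i\le n\rangle$. Then the elementary abelian regular subgroups $R$ of $\mathrm{Sym}(V)$ with $T\cap R=\sigma_W$ are exactly the groups $T_b$, $b\in W\setminus\{0\}$, and these are pairwise distinct; in particular there are exactly $2^{n-2}-1$ of them.
   Context: For $v\in V$, $v^{(i)}\in\mathbb{F}_2$ is its $i$-th coordinate. $T=\{\sigma_v:v\in V\}$ with $\sigma_v:x\mapsto x+v$; $\sigma_W=\{\sigma_w:w\in W\}$. Permutations act on the right. *)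

theory Defs
  imports "HOL-Algebra.Bij" "HOL-Algebra.Generated_Groups"
begin

text \<open>V = F_2^n: vectors are functions nat \<Rightarrow> bool (bool = F_2, True = 1) supported on the
  coordinates 1..n; v i is the i-th coordinate.\<close>

type_synonym vec = "nat \<Rightarrow> bool"

definition Vsp :: "nat \<Rightarrow> vec set" where
  "Vsp n = {v. \<forall>i. v i \<longrightarrow> 1 \<le> i \<and> i \<le> n}"

definition vzero :: vec where "vzero = (\<lambda>_. False)"

definition vadd :: "vec \<Rightarrow> vec \<Rightarrow> vec" where
  "vadd x y = (\<lambda>i. x i \<noteq> y i)"

definition smult :: "bool \<Rightarrow> vec \<Rightarrow> vec" where
  "smult c v = (\<lambda>i. c \<and> v i)"

definition ebas :: "nat \<Rightarrow> vec" where
  "ebas i = (\<lambda>j. j = i)"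

definition Wsp :: "nat \<Rightarrow> vec set" where
  "Wsp n = {v \<in> Vsp n. \<not> v 1 \<and> \<not> v 2}"

abbreviation SymV :: "nat \<Rightarrow> (vec \<Rightarrow> vec) monoid" where
  "SymV n \<equiv> BijGroup (Vsp n)"

definition transl :: "nat \<Rightarrow> vec \<Rightarrow> (vec \<Rightarrow> vec)" where
  "transl n v = (\<lambda>x\<in>Vsp n. vadd x v)"

definition pi_b :: "nat \<Rightarrow> vec \<Rightarrow> (vec \<Rightarrow> vec)" where
  "pi_b n b = (\<lambda>x\<in>Vsp n. vadd (vadd x (smult (x 2) b)) (ebas 1))"

definition eps_b :: "nat \<Rightarrow> vec \<Rightarrow> (vec \<Rightarrow> vec)" where
  "eps_b n b = (\<lambda>x\<in>Vsp n. vadd (vadd x (smult (x 1) b)) (ebas 2))"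

definition T_b :: "nat \<Rightarrow> vec \<Rightarrow> (vec \<Rightarrow> vec) set" where
  "T_b n b = generate (SymV n)
     ({pi_b n b, eps_b n b} \<union> {transl n (ebas i) | i. 3 \<le> i \<and> i \<le> n})"

definition elem_abelian :: "('a, 'b) monoid_scheme \<Rightarrow> 'a set \<Rightarrow> bool" where
  "elem_abelian G R \<longleftrightarrow> (\<forall>g\<in>R. \<forall>h\<in>R. g \<otimes>\<^bsub>G\<^esub> h = h \<otimes>\<^bsub>G\<^esub> g) \<and>
                        (\<forall>g\<in>R. g \<otimes>\<^bsub>G\<^esub> g = \<one>\<^bsub>G\<^esub>)"

definition regular_on :: "'a set \<Rightarrow> ('a \<Rightarrow> 'a) set \<Rightarrow> bool" where
  "regular_on S R \<longleftrightarrow> (\<forall>x\<in>S. \<forall>y\<in>S. \<exists>!g. g \<in> R \<and> g x = y)"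

definition good_subgroups :: "nat \<Rightarrow> (vec \<Rightarrow> vec) set set" where
  "good_subgroups n = {R. subgroup R (SymV n) \<and> elem_abelian (SymV n) R \<and>
      regular_on (Vsp n) R \<and> transl n ` Vsp n \<inter> R = transl n ` Wsp n}"

end

theory Submission
  imports Defs
begin


definition phi :: "vec \<Rightarrow> vec \<Rightarrow> vec \<Rightarrow> vec" where
  "phi b x v = smult ((x 1 \<and> v 2) \<noteq> (x 2 \<and> v 1)) b"

definition rr :: "nat \<Rightarrow> vec \<Rightarrow> vec \<Rightarrow> (vec \<Rightarrow> vec)" where
  "rr n b v = (\<lambda>x\<in>Vsp n. vadd (vadd x v) (phi b x v))"

definition opb :: "vec \<Rightarrow> vec \<Rightarrow> vec \<Rightarrow> vec" where
  "opb b u v = vadd (vadd u v) (phi b u v)"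

definition Rb :: "nat \<Rightarrow> vec \<Rightarrow> (vec \<Rightarrow> vec) set" where
  "Rb n b = rr n b ` Vsp n"

lemmas vdefs = vadd_def smult_def phi_def vzero_def ebas_def

lemma vadd_Vsp[simp]: "x \<in> Vsp n \<Longrightarrow> y \<in> Vsp n \<Longrightarrow> vadd x y \<in> Vsp n"
  by (auto simp: Vsp_def vadd_def)
lemma smult_Vsp[simp]: "x \<in> Vsp n \<Longrightarrow> smult c x \<in> Vsp n"
  by (auto simp: Vsp_def smult_def)
lemma phi_Vsp[simp]: "b \<in> Vsp n \<Longrightarrow> phi b x v \<in> Vsp n"
  by (simp add: phi_def)
lemma vzero_Vsp[simp]: "vzero \<in> Vsp n"
  by (auto simp: Vsp_def vzero_def)
lemma ebas_Vsp: "1 \<le> i \<Longrightarrow> i \<le> n \<Longrightarrow> ebas i \<in> Vsp n"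
  by (auto simp: Vsp_def ebas_def)
lemma Wsp_Vsp: "w \<in> Wsp n \<Longrightarrow> w \<in> Vsp n"
  by (simp add: Wsp_def)

lemma BijG_carrier: "carrier (BijGroup S) = Bij S"
  by (simp add: BijGroup_def)
lemma BijG_mult: "f \<in> Bij S \<Longrightarrow> g \<in> Bij S \<Longrightarrow> f \<otimes>\<^bsub>BijGroup S\<^esub> g = compose S f g"
  by (simp add: BijGroup_def)
lemma BijG_one: "\<one>\<^bsub>BijGroup S\<^esub> = (\<lambda>x\<in>S. x)"
  by (simp add: BijGroup_def)

context
  fixes n :: nat and b :: vec
  assumes bW: "b \<in> Wsp n"
begin

lemma b_props: "b \<in> Vsp n" "\<not> b 1" "\<not> b 2"
  using bW by (auto simp: Wsp_def)

lemma rr_in: "u \<in> Vsp n \<Longrightarrow> x \<in> Vsp n \<Longrightarrow> rr n b u x \<in> Vsp n"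
  by (simp add: rr_def b_props)

lemma rr_invol: "u \<in> Vsp n \<Longrightarrow> x \<in> Vsp n \<Longrightarrow> rr n b u (rr n b u x) = x"
  using b_props by (simp add: rr_def rr_in[unfolded rr_def]) (auto simp: vdefs fun_eq_iff)

lemma rr_Bij: "u \<in> Vsp n \<Longrightarrow> rr n b u \<in> Bij (Vsp n)"
  unfolding Bij_def
  apply (rule IntI)
   apply (simp add: rr_def)
  apply (rule CollectI, rule bij_betw_byWitness[where f'="rr n b u"])
  using rr_invol rr_in by auto

lemma opb_Vsp: "u \<in> Vsp n \<Longrightarrow> v \<in> Vsp n \<Longrightarrow> opb b u v \<in> Vsp n"
  by (simp add: opb_def b_props)

lemma rr_mult: "u \<in> Vsp n \<Longrightarrow> v \<in> Vsp n \<Longrightarrow>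
   rr n b u \<otimes>\<^bsub>SymV n\<^esub> rr n b v = rr n b (opb b u v)"
  apply (simp add: BijG_mult rr_Bij compose_def)
  apply (rule ext)
  using b_props
  apply (simp add: rr_def rr_in[unfolded rr_def] opb_def)
  apply (auto simp: vdefs fun_eq_iff)
  done

lemma rr_zero: "rr n b vzero = \<one>\<^bsub>SymV n\<^esub>"
  by (auto simp: BijG_one rr_def vdefs fun_eq_iff)

lemma rr_at0: "u \<in> Vsp n \<Longrightarrow> rr n b u vzero = u"
  by (simp add: rr_def vzero_Vsp[of n]) (auto simp: rr_def vdefs fun_eq_iff)

lemma opb_comm: "opb b u v = opb b v u"
  by (auto simp: opb_def vdefs fun_eq_iff)

lemma opb_self: "opb b u u = vzero"
  by (auto simp: opb_def vdefs fun_eq_iff)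

lemma Rb_subgroup: "subgroup (Rb n b) (SymV n)"
proof (rule group.subgroupI[OF group_BijGroup])
  show "Rb n b \<subseteq> carrier (SymV n)" by (auto simp: Rb_def BijG_carrier rr_Bij)
  show "Rb n b \<noteq> {}" unfolding Rb_def using vzero_Vsp[of n] by blast
  fix a assume "a \<in> Rb n b"
  then obtain u where u: "u \<in> Vsp n" "a = rr n b u" by (auto simp: Rb_def)
  have "inv\<^bsub>SymV n\<^esub> a = a"
    apply (rule group.inv_equality[OF group_BijGroup])
    using u by (auto simp: rr_mult opb_self rr_zero BijG_carrier rr_Bij)
  then show "inv\<^bsub>SymV n\<^esub> a \<in> Rb n b" using \<open>a \<in> Rb n b\<close> by simp
next
  fix a c assume "a \<in> Rb n b" "c \<in> Rb n b"
  then show "a \<otimes>\<^bsub>SymV n\<^esub> c \<in> Rb n b"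
    by (auto simp: Rb_def rr_mult opb_Vsp)
qed

lemma Rb_elem: "elem_abelian (SymV n) (Rb n b)"
  unfolding elem_abelian_def
  by (auto simp: Rb_def rr_mult opb_comm opb_self rr_zero)

lemma Rb_regular: "regular_on (Vsp n) (Rb n b)"
  unfolding regular_on_def
proof (intro ballI)
  fix x y assume x: "x \<in> Vsp n" and y: "y \<in> Vsp n"
  define u where "u = vadd (vadd x y) (phi b x (vadd x y))"
  have u: "u \<in> Vsp n" using x y b_props by (simp add: u_def)
  have "rr n b u x = y"
    using x b_props by (auto simp: rr_def u_def vdefs fun_eq_iff)
  moreover have "g = rr n b u" if g1: "g \<in> Rb n b" and g2: "g x = y" for g
  proof -
    obtain u' where u': "u' \<in> Vsp n" "g = rr n b u'" using g1 by (auto simp: Rb_def)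
    have e: "vadd (vadd x u') (phi b x u') = y" using u' g2 x by (simp add: rr_def)
    have e1: "u' 1 = (x 1 \<noteq> y 1)" "u' 2 = (x 2 \<noteq> y 2)"
      using fun_cong[OF e, of 1] fun_cong[OF e, of 2] b_props
      by (auto simp: vadd_def phi_def smult_def)
    have ph: "phi b x u' = phi b x (vadd x y)"
      unfolding phi_def vadd_def using e1 by auto
    have "u' = u"
    proof
      fix i show "u' i = u i"
        using fun_cong[OF e, of i] unfolding u_def ph[symmetric] by (auto simp: vadd_def)
    qed
    then show ?thesis using u' by simp
  qed
  ultimately show "\<exists>!g. g \<in> Rb n b \<and> g x = y"
  proof (intro ex1I conjI)
    show "rr n b u \<in> Rb n b" using u by (simp add: Rb_def)
  qed auto
qed

lemma rr_W: "w \<in> Wsp n \<Longrightarrow> rr n b w = transl n w"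
  by (auto simp: rr_def transl_def Wsp_def vdefs fun_eq_iff)

end


context
  fixes n :: nat and b :: vec
  assumes bW: "b \<in> Wsp n" and n2: "2 < n"
begin

lemma e1V: "ebas 1 \<in> Vsp n" and e2V: "ebas 2 \<in> Vsp n"
  using n2 by (auto intro: ebas_Vsp)

lemma eiW: "3 \<le> i \<Longrightarrow> i \<le> n \<Longrightarrow> ebas i \<in> Wsp n"
  by (auto simp: Wsp_def Vsp_def ebas_def)

lemma pi_eq: "pi_b n b = rr n b (ebas 1)"
  unfolding pi_b_def rr_def
  by (rule restrict_ext) (auto simp: vdefs fun_eq_iff)

lemma eps_eq: "eps_b n b = rr n b (ebas 2)"
  unfolding eps_b_def rr_def
  by (rule restrict_ext) (auto simp: vdefs fun_eq_iff)

abbreviation "gens \<equiv> {pi_b n b, eps_b n b} \<union> {transl n (ebas i) | i. 3 \<le> i \<and> i \<le> n}"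

lemma gens_sub: "gens \<subseteq> Rb n b"
proof -
  have "transl n (ebas i) \<in> Rb n b" if "3 \<le> i" "i \<le> n" for i
    using rr_W[OF bW eiW[OF that]] eiW[OF that] Wsp_Vsp unfolding Rb_def by (metis image_eqI)
  then show ?thesis using e1V e2V by (auto simp: pi_eq eps_eq Rb_def)
qed

lemma opb_W: "w \<in> Wsp n \<Longrightarrow> opb b u w = vadd u w"
  by (auto simp: opb_def Wsp_def vdefs fun_eq_iff)

lemma W_gen: "w \<in> Wsp n \<Longrightarrow> rr n b w \<in> generate (SymV n) gens"
proof -
  have "\<forall>w\<in>Wsp n. (\<forall>i. w i \<longrightarrow> i < k) \<longrightarrow> rr n b w \<in> generate (SymV n) gens" for k
  proof (induction k)
    case 0
    show ?case
    proof (intro ballI impI)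
      fix w :: vec assume "\<forall>i. w i \<longrightarrow> i < 0"
      then have "w = vzero" by (auto simp: vzero_def)
      then show "rr n b w \<in> generate (SymV n) gens" by (simp add: rr_zero[OF bW] generate.one)
    qed
  next
    case (Suc k)
    show ?case
    proof (intro ballI impI)
      fix w assume w: "w \<in> Wsp n" and sup: "\<forall>i. w i \<longrightarrow> i < Suc k"
      show "rr n b w \<in> generate (SymV n) gens"
      proof (cases "w k")
        case False
        then have "\<forall>i. w i \<longrightarrow> i < k" using sup less_Suc_eq by auto
        then show ?thesis using Suc.IH w by auto
      next
        case True
        define w' where "w' = w(k := False)"
        have "1 \<le> k \<and> k \<le> n" "k \<noteq> 1" "k \<noteq> 2" using True w by (auto simp: Wsp_def Vsp_def)
        then have kr: "3 \<le> k" "k \<le> n" by auto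
        have w'W: "w' \<in> Wsp n" using w by (auto simp: Wsp_def Vsp_def w'_def)
        have "\<forall>i. w' i \<longrightarrow> i < k" using sup by (auto simp: w'_def less_Suc_eq)
        then have g1: "rr n b w' \<in> generate (SymV n) gens" using Suc.IH w'W by auto
        have g2: "rr n b (ebas k) \<in> generate (SymV n) gens"
          using rr_W[OF bW eiW[OF kr]] kr by (auto intro: generate.incl)
        have "rr n b w' \<otimes>\<^bsub>SymV n\<^esub> rr n b (ebas k) = rr n b (opb b w' (ebas k))"
          using rr_mult[OF bW] w'W eiW[OF kr] Wsp_Vsp by blast
        also have "opb b w' (ebas k) = w"
          using opb_W[OF eiW[OF kr]] True by (auto simp: w'_def vadd_def ebas_def fun_eq_iff)
        finally show ?thesis using generate.eng[OF g1 g2] by simp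
      qed
    qed
  qed
  moreover assume "w \<in> Wsp n"
  moreover have "\<forall>i. w i \<longrightarrow> i < Suc n" using \<open>w \<in> Wsp n\<close> by (auto simp: Wsp_def Vsp_def)
  ultimately show ?thesis by blast
qed

lemma Tb_eq: "T_b n b = Rb n b"
proof
  show "T_b n b \<subseteq> Rb n b"
    unfolding T_b_def
    by (rule group.generate_subgroup_incl[OF group_BijGroup gens_sub Rb_subgroup[OF bW]])
  show "Rb n b \<subseteq> T_b n b"
  proof
    fix g assume "g \<in> Rb n b"
    then obtain v where v: "v \<in> Vsp n" "g = rr n b v" by (auto simp: Rb_def)
    define base where "base = (if v 1 \<and> v 2 then opb b (ebas 1) (ebas 2)
       else if v 1 then ebas 1 else if v 2 then ebas 2 else vzero)"
    have e12: "opb b (ebas 1) (ebas 2) \<in> Vsp n" using opb_Vsp[OF bW e1V e2V] .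
    have bV: "base \<in> Vsp n" using e12 e1V e2V by (simp add: base_def)
    have bg: "rr n b base \<in> generate (SymV n) gens"
    proof -
      have p: "rr n b (ebas 1) \<in> generate (SymV n) gens" using pi_eq by (auto intro: generate.incl)
      have e: "rr n b (ebas 2) \<in> generate (SymV n) gens" using eps_eq by (auto intro: generate.incl)
      have "rr n b (opb b (ebas 1) (ebas 2)) \<in> generate (SymV n) gens"
        using generate.eng[OF p e] rr_mult[OF bW e1V e2V] by simp
      moreover have "rr n b vzero \<in> generate (SymV n) gens"
        by (simp add: rr_zero[OF bW] generate.one)
      ultimately show ?thesis using p e by (simp add: base_def)
    qed
    have wW: "vadd v base \<in> Wsp n"
    proof -
      have "vadd v base \<in> Vsp n" using bV v by simp
      moreover have "\<not> vadd v base 1 \<and> \<not> vadd v base 2"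
        using b_props[OF bW] by (auto simp: base_def opb_def vdefs)
      ultimately show ?thesis by (simp add: Wsp_def)
    qed
    have "rr n b base \<otimes>\<^bsub>SymV n\<^esub> rr n b (vadd v base) = rr n b (opb b base (vadd v base))"
      using rr_mult[OF bW bV] wW Wsp_Vsp by blast
    also have "opb b base (vadd v base) = v" using opb_W[OF wW] by (auto simp: vadd_def fun_eq_iff)
    finally show "g \<in> T_b n b"
      unfolding T_b_def v(2) using generate.eng[OF bg W_gen[OF wW]] by simp
  qed
qed

lemma Rb_inter: assumes "b \<noteq> vzero"
  shows "transl n ` Vsp n \<inter> Rb n b = transl n ` Wsp n"
proof
  show "transl n ` Wsp n \<subseteq> transl n ` Vsp n \<inter> Rb n b"
    using rr_W[OF bW] Wsp_Vsp unfolding Rb_def by (auto intro!: image_eqI)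
  show "transl n ` Vsp n \<inter> Rb n b \<subseteq> transl n ` Wsp n"
  proof
    fix g assume "g \<in> transl n ` Vsp n \<inter> Rb n b"
    then obtain v u where v: "v \<in> Vsp n" "g = transl n v" and u: "u \<in> Vsp n" "g = rr n b u"
      by (auto simp: Rb_def)
    have t0: "transl n v vzero = v"
      by (simp add: transl_def vzero_Vsp[of n]) (auto simp: vdefs)
    have "v = u" using v u rr_at0[OF bW u(1)] t0 by simp
    have ev: "phi b x v = vzero" if "x \<in> Vsp n" for x
      using fun_cong[of "transl n v" "rr n b u" x] v u that \<open>v = u\<close>
      by (auto simp: transl_def rr_def vdefs fun_eq_iff)
    obtain i where "b i" using assms by (auto simp: vzero_def)
    then have "\<not> v 1" "\<not> v 2"
      using fun_cong[OF ev[OF e2V], of i] fun_cong[OF ev[OF e1V], of i]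
      by (auto simp: vdefs)
    then have "v \<in> Wsp n" using v by (simp add: Wsp_def)
    then show "g \<in> transl n ` Wsp n" using v by simp
  qed
qed

lemma Rb_good: "b \<noteq> vzero \<Longrightarrow> Rb n b \<in> good_subgroups n"
  unfolding good_subgroups_def
  by (intro CollectI conjI Rb_subgroup[OF bW] Rb_elem[OF bW] Rb_regular[OF bW] Rb_inter)

end

lemma Rb_inj: assumes "b \<in> Wsp n" "b' \<in> Wsp n" "2 < n" "Rb n b = Rb n b'"
  shows "b = b'"
proof -
  have e1: "ebas 1 \<in> Vsp n" "ebas 2 \<in> Vsp n" using assms(3) by (auto intro: ebas_Vsp)
  have "rr n b (ebas 1) \<in> Rb n b'" using assms(4) e1 by (auto simp: Rb_def)
  then obtain u where u: "u \<in> Vsp n" "rr n b (ebas 1) = rr n b' u" by (auto simp: Rb_def)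
  have "u = ebas 1" using u rr_at0[OF assms(1) e1(1)] rr_at0[OF assms(2) u(1)] by simp
  then have "rr n b (ebas 1) (ebas 2) = rr n b' (ebas 1) (ebas 2)" using u by simp
  then have "vadd (vadd (ebas 2) (ebas 1)) (phi b (ebas 2) (ebas 1)) =
             vadd (vadd (ebas 2) (ebas 1)) (phi b' (ebas 2) (ebas 1))"
    using e1 by (simp add: rr_def)
  then have "\<And>i. b i = b' i"
    by (drule_tac x=i in fun_cong) (simp add: vdefs, blast)
  then show ?thesis by (simp add: fun_eq_iff)
qed



lemma prop6:
  fixes p1 p2 q1 q2 a1 a2 :: bool
  shows "\<not> (q1 = p1 \<and> q2 = p2) \<Longrightarrow>
    (p1 = False \<and> p2 = False \<longrightarrow> q1 = a1 \<and> q2 = a2) \<Longrightarrow>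
    (a1 = p1 \<and> a2 = p2 \<longrightarrow> q1 = False \<and> q2 = False) \<Longrightarrow>
    (a1 = q1 \<and> a2 = q2 \<longrightarrow> p1 = False \<and> p2 = False) \<Longrightarrow>
    (q1 = False \<and> q2 = False \<longrightarrow> p1 = a1 \<and> p2 = a2) \<Longrightarrow>
    \<not> (a1 = False \<and> a2 = False) \<Longrightarrow>
    q1 = (p1 \<noteq> a1) \<and> q2 = (p2 \<noteq> a2)"
  by (cases p1; cases p2; cases q1; cases q2; cases a1; cases a2) simp_all

context
  fixes n :: nat and R :: "(vec \<Rightarrow> vec) set"
  assumes good: "R \<in> good_subgroups n" and n2: "2 < n"
begin

abbreviation "S \<equiv> Vsp n"

lemma sg: "subgroup R (SymV n)" and ea: "elem_abelian (SymV n) R"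
  and reg: "regular_on S R" and int: "transl n ` S \<inter> R = transl n ` Wsp n"
  using good by (auto simp: good_subgroups_def)

lemma RB: "g \<in> R \<Longrightarrow> g \<in> Bij S"
  using subgroup.subset[OF sg] by (auto simp: BijG_carrier)

lemma ev_in: "g \<in> R \<Longrightarrow> x \<in> S \<Longrightarrow> g x \<in> S"
  using Bij_imp_funcset[OF RB] by blast

lemma gext: "g \<in> R \<Longrightarrow> g \<in> extensional S"
  using Bij_imp_extensional[OF RB] .

lemma comm: "g \<in> R \<Longrightarrow> k \<in> R \<Longrightarrow> x \<in> S \<Longrightarrow> g (k x) = k (g x)"
proof -
  assume a: "g \<in> R" "k \<in> R" "x \<in> S"
  have "g \<otimes>\<^bsub>SymV n\<^esub> k = k \<otimes>\<^bsub>SymV n\<^esub> g" using ea a by (simp add: elem_abelian_def)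
  then have "compose S g k = compose S k g" using a RB by (simp add: BijG_mult)
  then have "compose S g k x = compose S k g x" by simp
  then show ?thesis using a by (simp add: compose_def)
qed

lemma invol: "g \<in> R \<Longrightarrow> x \<in> S \<Longrightarrow> g (g x) = x"
proof -
  assume a: "g \<in> R" "x \<in> S"
  have "g \<otimes>\<^bsub>SymV n\<^esub> g = \<one>\<^bsub>SymV n\<^esub>" using ea a by (simp add: elem_abelian_def)
  then have "compose S g g = (\<lambda>x\<in>S. x)" using a RB by (simp add: BijG_mult BijG_one)
  then have "compose S g g x = x" using a by simp
  then show ?thesis using a by (simp add: compose_def)
qed

lemma uniq: assumes "g \<in> R" "k \<in> R" "x \<in> S" "g x = k x" shows "g = k"
proof -
  have "\<exists>!f. f \<in> R \<and> f x = g x" using reg assms(3) ev_in[OF assms(1,3)]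
    unfolding regular_on_def by blast
  then show ?thesis using assms by (metis (no_types, lifting))
qed

lemma exR: assumes "x \<in> S" "y \<in> S" shows "\<exists>g\<in>R. g x = y"
proof -
  have "\<exists>!f. f \<in> R \<and> f x = y" using reg assms unfolding regular_on_def by blast
  then show ?thesis by blast
qed

lemma oneR: "(\<lambda>x\<in>S. x) \<in> R"
  using subgroup.one_closed[OF sg] by (simp add: BijG_one)

lemma transW: "w \<in> Wsp n \<Longrightarrow> transl n w \<in> R"
proof -
  assume "w \<in> Wsp n"
  then have "transl n w \<in> transl n ` Wsp n" by (rule imageI)
  then have "transl n w \<in> transl n ` S \<inter> R" by (simp only: int)
  then show ?thesis by (rule IntD2)
qed

lemma tr_app: "x \<in> S \<Longrightarrow> transl n w x = vadd x w"
  by (simp add: transl_def)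

lemma tr0: "transl n v vzero = v"
  by (simp add: transl_def vzero_Vsp[of n]) (simp add: vadd_def vzero_def)

lemma transV: assumes a: "v \<in> S" "transl n v \<in> R" shows "v \<in> Wsp n"
proof -
  have "transl n v \<in> transl n ` S" using a(1) by (rule imageI)
  then have "transl n v \<in> transl n ` S \<inter> R" using a(2) by (rule IntI)
  then have "transl n v \<in> transl n ` Wsp n" by (simp only: int)
  then obtain w where w2: "transl n v = transl n w" and w1: "w \<in> Wsp n" by (rule imageE)
  note w = w1 w2
  have "v = w" using tr0[of v] tr0[of w] w(2) by metis
  then show ?thesis using w by simp
qed

lemma L0: "g \<in> R \<Longrightarrow> x \<in> S \<Longrightarrow> w \<in> Wsp n \<Longrightarrow> g (vadd x w) = vadd (g x) w"
  using comm[OF _ transW, of g w x] tr_app ev_in by simp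

lemma L1: assumes "g \<in> R" "x \<in> S" "y \<in> S" "x 1 = y 1" "x 2 = y 2"
  shows "g y = vadd (vadd (g x) x) y"
proof -
  have "vadd x y \<in> S" using assms by simp
  then have wW: "vadd x y \<in> Wsp n" using assms by (simp add: Wsp_def vadd_def)
  have "y = vadd x (vadd x y)" by (auto simp: vadd_def fun_eq_iff)
  then have "g y = vadd (g x) (vadd x y)" using L0[OF assms(1,2) wW] by metis
  then show ?thesis by (auto simp: vadd_def fun_eq_iff)
qed

lemma L1c: assumes "g \<in> R" "x \<in> S" "y \<in> S"
  shows "x 1 = y 1 \<and> x 2 = y 2 \<longrightarrow> g y 1 = g x 1 \<and> g y 2 = g x 2"
  using L1[OF assms] by (auto simp: vadd_def)

lemma Pi: assumes g: "g \<in> R" and x: "x \<in> S"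
  shows "g x 1 = (x 1 \<noteq> g vzero 1) \<and> g x 2 = (x 2 \<noteq> g vzero 2)"
proof (cases "\<exists>y\<in>S. g y 1 = y 1 \<and> g y 2 = y 2")
  case True
  then obtain y where y: "y \<in> S" "g y 1 = y 1" "g y 2 = y 2" by blast
  have all: "g z 1 = z 1 \<and> g z 2 = z 2" if z: "z \<in> S" for z
  proof -
    obtain k where k: "k \<in> R" "k y = z" using exR[OF y(1) z] by blast
    define w where "w = vadd y (g y)"
    have "w \<in> S" using y ev_in[OF g y(1)] by (simp add: w_def)
    then have wW: "w \<in> Wsp n" using y by (simp add: Wsp_def w_def vadd_def)
    have gy: "g y = vadd y w" by (auto simp: w_def vadd_def fun_eq_iff)
    have "g z = k (g y)" using comm[OF g k(1) y(1)] k by simp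
    also have "\<dots> = vadd z w" using gy L0[OF k(1) y(1) wW] k by simp
    finally show ?thesis using wW by (simp add: Wsp_def vadd_def)
  qed
  show ?thesis using all[OF x] all[OF vzero_Vsp] by (simp add: vzero_def)
next
  case False
  have a: "g vzero \<in> S" using ev_in[OF g vzero_Vsp] .
  have gx: "g x \<in> S" using ev_in[OF g x] .
  have ga0: "g (g vzero) = vzero" using invol[OF g vzero_Vsp] .
  have gg: "g (g x) = x" using invol[OF g x] .
  have i: "\<not> (g x 1 = x 1 \<and> g x 2 = x 2)" using False x by blast
  have vi: "\<not> (g vzero 1 = vzero 1 \<and> g vzero 2 = vzero 2)" using False vzero_Vsp by blast
  note ii = L1c[OF g vzero_Vsp x]
  note iii = L1c[OF g a x]
  note iv = L1c[OF g a gx]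
  note v = L1c[OF g vzero_Vsp gx]
  have z1: "vzero 1 = False" "vzero 2 = False" by (simp_all add: vzero_def)
  have ii': "x 1 = False \<and> x 2 = False \<longrightarrow> g x 1 = g vzero 1 \<and> g x 2 = g vzero 2"
    using ii unfolding z1 by simp
  have iii': "g vzero 1 = x 1 \<and> g vzero 2 = x 2 \<longrightarrow> g x 1 = False \<and> g x 2 = False"
    using iii unfolding ga0 z1 .
  have iv': "g vzero 1 = g x 1 \<and> g vzero 2 = g x 2 \<longrightarrow> x 1 = False \<and> x 2 = False"
    using iv unfolding ga0 gg z1 .
  have v': "g x 1 = False \<and> g x 2 = False \<longrightarrow> x 1 = g vzero 1 \<and> x 2 = g vzero 2"
    using v unfolding gg z1 by simp
  have vi': "\<not> (g vzero 1 = False \<and> g vzero 2 = False)" using vi unfolding z1 .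
  show ?thesis using i ii' iii' iv' v' vi'
    by (rule prop6)
qed

definition hh :: "vec \<Rightarrow> (vec \<Rightarrow> vec)" where
  "hh u = (THE g. g \<in> R \<and> g vzero = u)"

lemma h_prop: "u \<in> S \<Longrightarrow> hh u \<in> R \<and> hh u vzero = u"
proof -
  assume u: "u \<in> S"
  have "\<exists>!g. g \<in> R \<and> g vzero = u" using reg u vzero_Vsp unfolding regular_on_def by blast
  then show ?thesis unfolding hh_def by (rule theI')
qed

lemma h_eq: "g \<in> R \<Longrightarrow> hh (g vzero) = g"
  using h_prop[OF ev_in[OF _ vzero_Vsp]] uniq vzero_Vsp by metis

lemma h0: "hh vzero = (\<lambda>x\<in>S. x)"
  using h_eq[OF oneR] by simp

lemma hsym: "u \<in> S \<Longrightarrow> v \<in> S \<Longrightarrow> hh u v = hh v u"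
  using comm[of "hh u" "hh v" vzero] h_prop vzero_Vsp by metis

lemma hself: "u \<in> S \<Longrightarrow> hh u u = vzero"
  using invol[of "hh u" vzero] h_prop vzero_Vsp by metis

abbreviation "e1 \<equiv> ebas 1"
abbreviation "e2 \<equiv> ebas 2"
abbreviation "cc \<equiv> vadd (ebas 1) (ebas 2)"

lemma eV: "e1 \<in> S" "e2 \<in> S" "cc \<in> S"
  using n2 by (auto intro!: ebas_Vsp vadd_Vsp)

lemma ebas_app: "ebas i j = (j = i)" by (simp add: ebas_def)

definition bb :: vec where "bb = vadd (vadd (hh e1 e2) e2) e1"

lemma bbW: "bb \<in> Wsp n"
proof -
  have h1: "hh e1 \<in> R" "hh e1 vzero = e1" using h_prop[OF eV(1)] by auto
  have "hh e1 e2 1 = True" "hh e1 e2 2 = True" using Pi[OF h1(1) eV(2)] h1(2) by (auto simp: ebas_app)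
  moreover have "bb \<in> S" using ev_in[OF h1(1) eV(2)] eV by (simp add: bb_def)
  ultimately show ?thesis by (simp add: Wsp_def bb_def vadd_def ebas_app)
qed

abbreviation "FF p q \<equiv> vadd (vadd p q) (phi bb p q)"

lemma FF_sym: "FF p q = FF q p"
  by (auto simp: vdefs fun_eq_iff)

lemma t12: "hh e1 e2 = FF e1 e2"
  by (auto simp: bb_def vdefs fun_eq_iff)

lemma t1c: "hh e1 cc = FF e1 cc"
proof -
  have h1: "hh e1 \<in> R" "hh e1 vzero = e1" and h2: "hh e2 \<in> R" "hh e2 vzero = e2"
    using h_prop eV by auto
  have "hh e1 (hh e2 e1) = hh e2 (hh e1 e1)" using comm[OF h1(1) h2(1) eV(1)] .
  also have "\<dots> = e2" using hself[OF eV(1)] h2 by simp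
  finally have A: "hh e1 (hh e2 e1) = e2" .
  have "hh e2 e1 = vadd cc bb" using hsym[OF eV(2,1)] by (auto simp: bb_def vdefs fun_eq_iff)
  then have "vadd (hh e1 cc) bb = e2" using A L0[OF h1(1) eV(3) bbW] by simp
  then have "hh e1 cc = vadd e2 bb" by (auto simp: vadd_def fun_eq_iff)
  then show ?thesis using bbW by (auto simp: Wsp_def vdefs fun_eq_iff)
qed

lemma t2c: "hh e2 cc = FF e2 cc"
proof -
  have h1: "hh e1 \<in> R" "hh e1 vzero = e1" and h2: "hh e2 \<in> R" "hh e2 vzero = e2"
    using h_prop eV by auto
  have "hh e2 (hh e1 e2) = hh e1 (hh e2 e2)" using comm[OF h2(1) h1(1) eV(2)] .
  also have "\<dots> = e1" using hself[OF eV(2)] h1 by simp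
  finally have A: "hh e2 (hh e1 e2) = e1" .
  have "hh e1 e2 = vadd cc bb" by (auto simp: bb_def vdefs fun_eq_iff)
  then have "vadd (hh e2 cc) bb = e1" using A L0[OF h2(1) eV(3) bbW] by simp
  then have "hh e2 cc = vadd e1 bb" by (auto simp: vadd_def fun_eq_iff)
  then show ?thesis using bbW by (auto simp: Wsp_def vdefs fun_eq_iff)
qed

lemma tz: "q \<in> S \<Longrightarrow> hh vzero q = FF vzero q"
  by (simp add: h0) (auto simp: vdefs fun_eq_iff)

lemma tself: "p \<in> S \<Longrightarrow> hh p p = FF p p"
  by (simp add: hself) (auto simp: vdefs fun_eq_iff)

abbreviation "Ps \<equiv> {vzero, e1, e2, cc}"

lemma table: assumes "p \<in> Ps" "q \<in> Ps" shows "hh p q = FF p q"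
proof -
  have sw: "hh p q = FF p q" if "hh q p = FF q p" "p \<in> S" "q \<in> S" for p q
    using that hsym FF_sym by metis
  have z0: "vzero \<in> S" by (rule vzero_Vsp)
  note T = tz[OF z0] tz[OF eV(1)] tz[OF eV(2)] tz[OF eV(3)]
     sw[OF tz[OF eV(1)] eV(1) z0] sw[OF tz[OF eV(2)] eV(2) z0] sw[OF tz[OF eV(3)] eV(3) z0]
     tself[OF eV(1)] tself[OF eV(2)] tself[OF eV(3)]
     t12 t1c t2c sw[OF t12 eV(2) eV(1)] sw[OF t1c eV(3) eV(1)] sw[OF t2c eV(3) eV(2)]
  have P: "p = vzero \<or> p = e1 \<or> p = e2 \<or> p = cc" using assms(1) by blast
  have Q: "q = vzero \<or> q = e1 \<or> q = e2 \<or> q = cc" using assms(2) by blast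
  show ?thesis using P Q T by (elim disjE) (simp_all only:)
qed

definition rep :: "vec \<Rightarrow> vec" where "rep u = (\<lambda>i. (i = 1 \<and> u 1) \<or> (i = 2 \<and> u 2))"

lemma rep_Ps: "rep u \<in> Ps"
proof -
  have "rep u = (if u 1 then (if u 2 then cc else e1) else (if u 2 then e2 else vzero))"
    by (auto simp: rep_def vdefs fun_eq_iff)
  then show ?thesis by simp
qed

lemma rep_V: "rep u \<in> S"
proof -
  have "rep u = vzero \<or> rep u = e1 \<or> rep u = e2 \<or> rep u = cc" using rep_Ps[of u] by simp
  then show ?thesis using eV vzero_Vsp[of n] by (elim disjE) simp_all
qed

lemma main_formula: assumes u: "u \<in> S" and v: "v \<in> S"
  shows "hh u v = FF u v"
proof -
  have hu: "hh u \<in> R" and hv: "hh (rep v) \<in> R" using h_prop u rep_V by auto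
  have A: "hh u v = vadd (vadd (hh u (rep v)) (rep v)) v"
    using L1[OF hu rep_V v] by (simp add: rep_def)
  have B: "hh u (rep v) = vadd (vadd (hh (rep v) (rep u)) (rep u)) u"
    using hsym[OF u rep_V] L1[OF hv rep_V u] by (simp add: rep_def)
  have C: "hh (rep v) (rep u) = FF (rep v) (rep u)" using table rep_Ps by blast
  show ?thesis unfolding A B C by (auto simp: rep_def vdefs fun_eq_iff)
qed

lemma R_rr: "g \<in> R \<Longrightarrow> g = rr n bb (g vzero)"
proof -
  assume g: "g \<in> R"
  have a: "g vzero \<in> S" using ev_in[OF g vzero_Vsp] .
  show ?thesis
  proof (rule extensionalityI[OF gext[OF g]])
    show "rr n bb (g vzero) \<in> extensional S" by (simp add: rr_def)
    fix x assume x: "x \<in> S"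
    have "g x = hh (g vzero) x" using h_eq[OF g] by simp
    also have "\<dots> = FF (g vzero) x" using main_formula[OF a x] .
    finally show "g x = rr n bb (g vzero) x" using x by (auto simp: rr_def vdefs fun_eq_iff)
  qed
qed

lemma rr_R: "v \<in> S \<Longrightarrow> rr n bb v = hh v"
  using R_rr[of "hh v"] h_prop by auto

lemma R_eq: "R = Rb n bb"
  unfolding Rb_def
proof
  show "R \<subseteq> rr n bb ` S" using R_rr ev_in vzero_Vsp by blast
  show "rr n bb ` S \<subseteq> R" using rr_R h_prop by auto
qed

lemma bb_nz: "bb \<noteq> vzero"
proof
  assume "bb = vzero"
  then have "rr n bb e1 = transl n e1" by (auto simp: rr_def transl_def vdefs fun_eq_iff)
  then have "transl n e1 \<in> R" using rr_R[OF eV(1)] h_prop[OF eV(1)] by simp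
  then have "e1 \<in> Wsp n" using transV eV by blast
  then show False by (simp add: Wsp_def ebas_def)
qed

lemma good_form: "\<exists>b\<in>Wsp n - {vzero}. R = Rb n b"
  using bbW bb_nz R_eq by blast

end



lemma W_img: "Wsp n = (\<lambda>A i. i \<in> A) ` Pow {3..n}"
proof
  show "Wsp n \<subseteq> (\<lambda>A i. i \<in> A) ` Pow {3..n}"
  proof
    fix v assume v: "v \<in> Wsp n"
    have "{i. v i} \<subseteq> {3..n}"
    proof
      fix i assume "i \<in> {i. v i}"
      then have "v i" by simp
      then have "1 \<le> i \<and> i \<le> n" "i \<noteq> 1" "i \<noteq> 2" using v by (auto simp: Wsp_def Vsp_def)
      then show "i \<in> {3..n}" by auto
    qed
    moreover have "v = (\<lambda>i. i \<in> {i. v i})" by simp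
    ultimately show "v \<in> (\<lambda>A i. i \<in> A) ` Pow {3..n}" by blast
  qed
  show "(\<lambda>A i. i \<in> A) ` Pow {3..n} \<subseteq> Wsp n"
    by (auto simp: Wsp_def Vsp_def)
qed

lemma card_W: "card (Wsp n) = 2 ^ (n - 2)"
proof -
  have "inj_on (\<lambda>A i. i \<in> A) (Pow {3..n})"
    by (rule inj_onI) (auto simp: fun_eq_iff)
  then have "card (Wsp n) = card (Pow {3..(n::nat)})" unfolding W_img by (rule card_image)
  also have "\<dots> = 2 ^ (n - 2)" by (simp add: card_Pow)
  finally show ?thesis .
qed

lemma fin_W: "finite (Wsp n)"
  unfolding W_img by simp

theorem mainTheorem8:
  fixes n :: nat
  assumes "n > 2"
  shows "good_subgroups n = T_b n ` (Wsp n - {vzero})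
       \<and> inj_on (T_b n) (Wsp n - {vzero})
       \<and> card (good_subgroups n) = 2 ^ (n - 2) - 1"
proof -
  have A: "good_subgroups n = T_b n ` (Wsp n - {vzero})"
  proof
    show "good_subgroups n \<subseteq> T_b n ` (Wsp n - {vzero})"
    proof
      fix R assume R: "R \<in> good_subgroups n"
      obtain b where b: "b \<in> Wsp n - {vzero}" "R = Rb n b" using good_form[OF R assms] by blast
      then have "R = T_b n b" using Tb_eq[OF _ assms] by simp
      then show "R \<in> T_b n ` (Wsp n - {vzero})" using b by blast
    qed
    show "T_b n ` (Wsp n - {vzero}) \<subseteq> good_subgroups n"
      using Tb_eq[OF _ assms] Rb_good[OF _ assms] by auto
  qed
  have B: "inj_on (T_b n) (Wsp n - {vzero})"
  proof (rule inj_onI)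
    fix b b' assume "b \<in> Wsp n - {vzero}" "b' \<in> Wsp n - {vzero}" "T_b n b = T_b n b'"
    then show "b = b'" using Rb_inj[OF _ _ assms] Tb_eq[OF _ assms] by auto
  qed
  have "\<not> vzero 1 \<and> \<not> vzero 2" by (simp add: vzero_def)
  then have "vzero \<in> Wsp n" using vzero_Vsp[of n] by (simp add: Wsp_def)
  then have "card (Wsp n - {vzero}) = 2 ^ (n - 2) - 1" using card_W fin_W by simp
  then have C: "card (good_subgroups n) = 2 ^ (n - 2) - 1"
    unfolding A using card_image[OF B] by simp
  show ?thesis using A B C by blast
qed


end
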